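(* For members $i\in\mathcal N$ with continuous-time dynamics $x'=f_i(x,u)$, $u\in U(x)$, and constraint set $K$, let $H=\bigcap_{i\in\mathcal N}\mathrm{Viab}_i(K)$ and let $\tilde U(x)=\bigcap_{i\in\mathcal N}\tilde U_i(x)$ for $x\in H$, where $\tilde U_i$ is member $i$'s viable regulation map on $\mathrm{Viab}_i(K)$. Then the condition $\mathrm{Dom}(\tilde U)=H$ is not sufficient for $H$ to be a viable set for all members: there exist such data with $\mathrm{Dom}(\tilde U)=H$ but $H$ not viable for some member.
   Context: $\mathrm{Viab}_i(K)$ is the viability kernel of $K$ for member $i$'s system: the set of $x\in K$ from which some evolution of $x'=f_i(x,u)$, $u\in U(x)$, stays in $K$ forever. A viable regulation map $\tilde U_i$ on $\mathrm{Viab}_i(K)$ associates to each state the admissible controls that are viable, i.e. controls $u\in U(x)$ under which the evolution can be kept in $\mathrm{Viab}_i(K)$ (all of $U(x)$ in the interior of the kernel). $\mathrm{Dom}(\tilde U)=\{x:\tilde U(x)\neq\emptyset\}$. A set $H$ is viable for a member if from every $x\in H$ some evolution of that member's system stays in $H$ forever. *)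

theory Defs
  imports "HOL-Analysis.Analysis"
begin

definition evolution ::
  "('a::real_normed_vector \<Rightarrow> 'c \<Rightarrow> 'a) \<Rightarrow> ('a \<Rightarrow> 'c set) \<Rightarrow> 'a \<Rightarrow> (real \<Rightarrow> 'a) \<Rightarrow> bool" where
  "evolution f U x0 x \<longleftrightarrow> x 0 = x0 \<and>
     (\<forall>t\<ge>0. \<exists>u\<in>U (x t). (x has_vector_derivative f (x t) u) (at t within {0..}))"

definition viable_from ::
  "('a::real_normed_vector \<Rightarrow> 'c \<Rightarrow> 'a) \<Rightarrow> ('a \<Rightarrow> 'c set) \<Rightarrow> 'a set \<Rightarrow> 'a \<Rightarrow> bool" where
  "viable_from f U S x0 \<longleftrightarrow> (\<exists>x. evolution f U x0 x \<and> (\<forall>t\<ge>0. x t \<in> S))"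

definition Viab ::
  "('a::real_normed_vector \<Rightarrow> 'c \<Rightarrow> 'a) \<Rightarrow> ('a \<Rightarrow> 'c set) \<Rightarrow> 'a set \<Rightarrow> 'a set" where
  "Viab f U K = {x0 \<in> K. viable_from f U K x0}"

definition viable_set ::
  "('a::real_normed_vector \<Rightarrow> 'c \<Rightarrow> 'a) \<Rightarrow> ('a \<Rightarrow> 'c set) \<Rightarrow> 'a set \<Rightarrow> bool" where
  "viable_set f U H \<longleftrightarrow> (\<forall>x0\<in>H. viable_from f U H x0)"

definition contingent_cone :: "'a::real_normed_vector set \<Rightarrow> 'a \<Rightarrow> 'a set" where
  "contingent_cone S x = {v. \<exists>h w. (\<forall>n. h n > 0) \<and> h \<longlonglongrightarrow> 0 \<and> w \<longlonglongrightarrow> v \<and>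
        (\<forall>n. x + h n *\<^sub>R w n \<in> S)}"

text \<open>Viable regulation map on Viab(K): the admissible controls whose velocity is
  contingent to the viability kernel (all of U(x) in the interior of the kernel);
  empty outside the kernel.\<close>
definition viable_reg ::
  "('a::real_normed_vector \<Rightarrow> 'c \<Rightarrow> 'a) \<Rightarrow> ('a \<Rightarrow> 'c set) \<Rightarrow> 'a set \<Rightarrow> 'a \<Rightarrow> 'c set" where
  "viable_reg f U K x =
     (if x \<in> Viab f U K then {u \<in> U x. f x u \<in> contingent_cone (Viab f U K) x} else {})"

end

theory Submission
  imports Defs
begin

lemma decr_bound:
  fixes x :: "real \<Rightarrow> real"
  assumes der: "\<And>t. t \<ge> 0 \<Longrightarrow> \<exists>d. (x has_vector_derivative d) (at t within {0..}) \<and> d \<le> - c"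
    and T: "T \<ge> 0"
  shows "x T \<le> x 0 - c * T"
proof -
  define D where "D t = (SOME d. (x has_vector_derivative d) (at t within {0..}) \<and> d \<le> - c)" for t
  have D: "(x has_vector_derivative D t) (at t within {0..}) \<and> D t \<le> - c" if "t \<ge> 0" for t
    unfolding D_def by (rule someI_ex) (use der that in auto)
  define g where "g t = x t + c * t" for t
  have gd: "(g has_derivative (*) (D s + c)) (at s within {0..T})" if "0 \<le> s" "s \<le> T" for s
  proof -
    have "(x has_field_derivative D s) (at s within {0..})"
      using D[of s] that by (simp add: has_real_derivative_iff_has_vector_derivative)
    then have "(x has_field_derivative D s) (at s within {0..T})"
      by (rule DERIV_subset) auto
    then have "(g has_field_derivative (D s + c)) (at s within {0..T})"
      unfolding g_def by (auto intro!: derivative_eq_intros)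
    then show ?thesis by (simp add: has_field_derivative_def)
  qed
  obtain s where s: "s \<in> {0..T}" "g T - g 0 = (D s + c) * T"
    using mvt_very_simple[OF T gd] by auto
  have "D s + c \<le> 0" using D[of s] s by auto
  with T s have "g T - g 0 \<le> 0" by (simp add: mult_nonpos_nonneg)
  then show ?thesis unfolding g_def by simp
qed

lemma evo_der:
  assumes "evolution f (\<lambda>_. UNIV) x0 x" "\<And>y u. f y u = F y" "t \<ge> 0"
  shows "(x has_vector_derivative F (x t)) (at t within {0..})"
  using assms unfolding evolution_def by auto

lemma cone_zero: "x \<in> S \<Longrightarrow> 0 \<in> contingent_cone S x"
  unfolding contingent_cone_def
  apply (rule CollectI, rule exI[of _ "\<lambda>n. inverse (real (Suc n))"], rule exI[of _ "\<lambda>n. 0"])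
  apply (intro conjI allI)
  using LIMSEQ_inverse_real_of_nat by auto

lemma cone_neg: assumes "(x::real) \<in> {0..2}" shows "- x \<in> contingent_cone {0..2} x"
  unfolding contingent_cone_def
proof (rule CollectI, rule exI[of _ "\<lambda>n. inverse (real (Suc n))"], rule exI[of _ "\<lambda>n. - x"], intro conjI allI)
  fix n
  have h: "0 < inverse (real (Suc n))" "inverse (real (Suc n)) \<le> 1" by (auto simp: field_simps)
  have "x + inverse (real (Suc n)) *\<^sub>R - x = x * (1 - inverse (real (Suc n)))" by (simp add: algebra_simps)
  moreover have "0 \<le> x * (1 - inverse (real (Suc n)))" using assms h by auto
  moreover have "x * (1 - inverse (real (Suc n))) \<le> x" using assms h by (simp add: algebra_simps)
  ultimately show "x + inverse (real (Suc n)) *\<^sub>R - x \<in> {0..2}" using assms by auto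
next
  show "(\<lambda>n. inverse (real (Suc n))) \<longlonglongrightarrow> 0" by (rule LIMSEQ_inverse_real_of_nat)
qed auto

definition F1 :: "real \<Rightarrow> real" where "F1 y = - y"
definition F2 :: "real \<Rightarrow> real" where "F2 y = (if y < 1 then -1 else 0)"
definition ff :: "nat \<Rightarrow> real \<Rightarrow> real \<Rightarrow> real" where
  "ff i y u = (if i = 0 then F1 y else F2 y)"

lemma viab1: "Viab (ff 0) (\<lambda>_. UNIV) {0..2} = {0..2}"
proof -
  have "viable_from (ff 0) (\<lambda>_. UNIV) {0..2} x0" if "x0 \<in> {0..2::real}" for x0
    unfolding viable_from_def
  proof (rule exI[of _ "\<lambda>t. x0 * exp (- t)"], intro conjI allI impI)
    show "evolution (ff 0) (\<lambda>_. UNIV) x0 (\<lambda>t. x0 * exp (- t))"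
      unfolding evolution_def ff_def F1_def
      by (auto intro!: derivative_eq_intros simp: has_real_derivative_iff_has_vector_derivative[symmetric])
    fix t :: real assume "t \<ge> 0"
    then have e: "exp (-t) \<le> 1" by simp
    have "0 \<le> x0 * exp (- t)" using that by simp
    moreover have "x0 * exp (- t) \<le> x0 * 1" using that e by (intro mult_left_mono) auto
    ultimately show "x0 * exp (- t) \<in> {0..2}" using that by auto
  qed
  then show ?thesis unfolding Viab_def by auto
qed

lemma viab2: "Viab (ff (Suc 0)) (\<lambda>_. UNIV) {0..2} = {1..2}"
proof -
  have V: "viable_from (ff (Suc 0)) (\<lambda>_. UNIV) {0..2} x0" if "x0 \<in> {1..2::real}" for x0
    unfolding viable_from_def
  proof (rule exI[of _ "\<lambda>t. x0"], intro conjI allI impI)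
    show "evolution (ff (Suc 0)) (\<lambda>_. UNIV) x0 (\<lambda>t. x0)"
      unfolding evolution_def using that by (simp add: ff_def F2_def)
  next
    fix t :: real
    show "x0 \<in> {0..2}" using that by simp
  qed
  have NV: "\<not> viable_from (ff (Suc 0)) (\<lambda>_. UNIV) {0..2} x0" if "x0 < 1" for x0
  proof
    assume "viable_from (ff (Suc 0)) (\<lambda>_. UNIV) {0..2} x0"
    then obtain x where ev: "evolution (ff (Suc 0)) (\<lambda>_. UNIV) x0 x" and st: "\<forall>t\<ge>0. x t \<in> {0..2}"
      unfolding viable_from_def by blast
    have x0: "x 0 = x0" using ev unfolding evolution_def by (rule conjunct1)
    have der: "(x has_vector_derivative F2 (x t)) (at t within {0..})" if "t \<ge> 0" for t
      by (rule evo_der[OF ev _ that]) (simp add: ff_def)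
    have le: "x t \<le> x0" if "t \<ge> 0" for t
    proof -
      have "x t \<le> x 0 - 0 * t"
      proof (rule decr_bound[OF _ that])
        fix s :: real assume "s \<ge> 0"
        show "\<exists>d. (x has_vector_derivative d) (at s within {0..}) \<and> d \<le> - 0"
          by (rule exI[of _ "F2 (x s)"]) (use der[OF \<open>s \<ge> 0\<close>] in \<open>simp add: F2_def\<close>)
      qed
      then show ?thesis using x0 by simp
    qed
    have lin: "x t \<le> x 0 - 1 * t" if "t \<ge> 0" for t
    proof (rule decr_bound[OF _ that])
      fix s :: real assume "s \<ge> 0"
      have "x s < 1" using le[OF \<open>s \<ge> 0\<close>] \<open>x0 < 1\<close> by simp
      then show "\<exists>d. (x has_vector_derivative d) (at s within {0..}) \<and> d \<le> - 1"
        by (intro exI[of _ "F2 (x s)"]) (use der[OF \<open>s \<ge> 0\<close>] in \<open>simp add: F2_def\<close>)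
    qed
    have a: "x 2 \<le> x 0 - 1 * 2" by (rule lin) simp
    have b: "x 2 \<in> {0..2}" using st by simp
    from a b x0 \<open>x0 < 1\<close> show False by simp
  qed
  show ?thesis unfolding Viab_def
  proof (rule set_eqI)
    fix y :: real
    show "y \<in> {x0 \<in> {0..2}. viable_from (ff (Suc 0)) (\<lambda>_. UNIV) {0..2} x0} \<longleftrightarrow> y \<in> {1..2}"
    proof (cases "y < 1")
      case True
      then show ?thesis using NV[OF True] by simp
    next
      case False
      then show ?thesis using V[of y] by auto
    qed
  qed
qed

theorem corollary1:
  shows "\<exists>(N :: nat set) (f :: nat \<Rightarrow> real \<Rightarrow> real \<Rightarrow> real) (U :: real \<Rightarrow> real set) (K :: real set).
     finite N \<and> N \<noteq> {} \<and>
     (let H = (\<Inter>i\<in>N. Viab (f i) U K);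
          Ut = (\<lambda>x. \<Inter>i\<in>N. viable_reg (f i) U K x)
      in {x \<in> H. Ut x \<noteq> {}} = H \<and> (\<exists>i\<in>N. \<not> viable_set (f i) U H))"
proof (rule exI[of _ "{0, Suc 0}"], rule exI[of _ ff], rule exI[of _ "\<lambda>_. UNIV"], rule exI[of _ "{0..2}"])
  have H: "(\<Inter>i\<in>{0, Suc 0}. Viab (ff i) (\<lambda>_. UNIV) {0..2::real}) = {1..2}"
    using viab1 viab2 by auto
  have dom: "(\<Inter>i\<in>{0, Suc 0}. viable_reg (ff i) (\<lambda>_. UNIV) {0..2} x) \<noteq> {}" if "x \<in> {1..2::real}" for x
  proof -
    have "0 \<in> viable_reg (ff 0) (\<lambda>_. UNIV) {0..2} x"
      using that cone_neg[of x] unfolding viable_reg_def viab1 by (simp add: ff_def F1_def)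
    moreover have "0 \<in> viable_reg (ff (Suc 0)) (\<lambda>_. UNIV) {0..2} x"
      using that cone_zero[of x "{1..2}"] unfolding viable_reg_def viab2 by (simp add: ff_def F2_def)
    ultimately show ?thesis by blast
  qed
  have nv: "\<not> viable_set (ff 0) (\<lambda>_. UNIV) {1..2::real}"
  proof
    assume "viable_set (ff 0) (\<lambda>_. UNIV) {1..2::real}"
    then obtain x where ev: "evolution (ff 0) (\<lambda>_. UNIV) 1 x" and st: "\<forall>t\<ge>0. x t \<in> {1..2}"
      unfolding viable_set_def viable_from_def by force
    have x0: "x 0 = 1" using ev unfolding evolution_def by (rule conjunct1)
    have der: "(x has_vector_derivative F1 (x t)) (at t within {0..})" if "t \<ge> 0" for t
      by (rule evo_der[OF ev _ that]) (simp add: ff_def)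
    have "x 1 \<le> x 0 - 1 * 1"
    proof (rule decr_bound)
      fix s :: real assume "s \<ge> 0"
      have "x s \<ge> 1" using st \<open>s \<ge> 0\<close> by auto
      then show "\<exists>d. (x has_vector_derivative d) (at s within {0..}) \<and> d \<le> - 1"
        by (intro exI[of _ "F1 (x s)"]) (use der[OF \<open>s \<ge> 0\<close>] in \<open>simp add: F1_def\<close>)
    qed simp
    moreover have "x 1 \<ge> 1" using st by simp
    ultimately show False using x0 by simp
  qed
  show "finite {0, Suc 0} \<and> {0, Suc 0} \<noteq> {} \<and>
     (let H = (\<Inter>i\<in>{0, Suc 0}. Viab (ff i) (\<lambda>_. UNIV) {0..2::real});
          Ut = (\<lambda>x. \<Inter>i\<in>{0, Suc 0}. viable_reg (ff i) (\<lambda>_. UNIV) {0..2} x)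
      in {x \<in> H. Ut x \<noteq> {}} = H \<and> (\<exists>i\<in>{0, Suc 0}. \<not> viable_set (ff i) (\<lambda>_. UNIV) H))"
    unfolding Let_def H using dom nv by blast
qed

end
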